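(* Let $N\ge 1$, $p>2$, and let $w\in C^1(\mathbb{R}^N)$ be a positive function with $w(x)>C$ for all $x\in\mathbb{R}^N$, for some constant $C>0$. For $R>0$ set $$A_R=\|w\|^{\frac{p+3}{p-1}}_{L^{\frac{p+3}{p-1}}(B_{2R}(0))}=\int_{B_{2R}(0)} w(x)^{\frac{p+3}{p-1}}\,dx .$$ Suppose $A_R=\mathcal{O}(R^\mu)$ (as $R\to\infty$) for some $\mu<\frac{p(p+3)}{p-1}$. Then for every $0<\zeta<1$ there is no stable weak solution $u\in C^{1,\zeta}_{loc}(\mathbb{R}^N)$ of $$-\operatorname{div}\big(w(x)|\nabla u|^{p-2}\nabla u\big)=e^u\quad\text{in }\mathbb{R}^N.$$
   Context: A function $u\in C^{1,\zeta}_{loc}(\mathbb{R}^N)$ is a weak solution of $-\operatorname{div}(w|\nabla u|^{p-2}\nabla u)=f(u)$ in $\mathbb{R}^N$ if $\int_{\mathbb{R}^N} w|\nabla u|^{p-2}\nabla u\cdot\nabla\varphi\,dx-\int_{\mathbb{R}^N} f(u)\varphi\,dx=0$ for all $\varphi\in C^1_c(\mathbb{R}^N)$. Such a weak solution is stable if for all $\varphi\in C^1_c(\mathbb{R}^N)$, $$\int_{\mathbb{R}^N} w|\nabla u|^{p-2}|\nabla\varphi|^2dx+(p-2)\int_{\mathbb{R}^N} w|\nabla u|^{p-4}(\nabla u\cdot\nabla\varphi)^2dx-\int_{\mathbb{R}^N} f'(u)\varphi^2dx\ge 0.$$ Here $f(u)=e^u$, so $f'(u)=e^u$. $B_r(0)$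 denotes the open ball of radius $r$ centered at the origin. *)

theory Defs
  imports "HOL-Analysis.Analysis" "HOL-Library.Landau_Symbols"
begin

definition is_gradient :: "('a::euclidean_space \<Rightarrow> real) \<Rightarrow> ('a \<Rightarrow> 'a) \<Rightarrow> bool" where
  "is_gradient w Dw \<longleftrightarrow> (\<forall>x. (w has_derivative (\<lambda>h. Dw x \<bullet> h)) (at x))"

definition C1_grad :: "('a::euclidean_space \<Rightarrow> real) \<Rightarrow> ('a \<Rightarrow> 'a) \<Rightarrow> bool" where
  "C1_grad w Dw \<longleftrightarrow> is_gradient w Dw \<and> continuous_on UNIV Dw"

definition C1_holder_loc_grad :: "real \<Rightarrow> ('a::euclidean_space \<Rightarrow> real) \<Rightarrow> ('a \<Rightarrow> 'a) \<Rightarrow> bool" where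
  "C1_holder_loc_grad \<zeta> u Du \<longleftrightarrow> C1_grad u Du \<and>
     (\<forall>K. compact K \<longrightarrow> (\<exists>L. \<forall>x\<in>K. \<forall>y\<in>K. norm (Du x - Du y) \<le> L * norm (x - y) powr \<zeta>))"

definition C1c_grad :: "('a::euclidean_space \<Rightarrow> real) \<Rightarrow> ('a \<Rightarrow> 'a) \<Rightarrow> bool" where
  "C1c_grad \<phi> D\<phi> \<longleftrightarrow> C1_grad \<phi> D\<phi> \<and> compact (closure {x. \<phi> x \<noteq> 0})"

text \<open>Weak solution of -div(w |grad u|^{p-2} grad u) = f(u) in R^N (u has gradient Du).\<close>
definition weak_solution ::
  "real \<Rightarrow> ('a::euclidean_space \<Rightarrow> real) \<Rightarrow> (real \<Rightarrow> real) \<Rightarrow> ('a \<Rightarrow> real) \<Rightarrow> ('a \<Rightarrow> 'a) \<Rightarrow> bool" where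
  "weak_solution p w f u Du \<longleftrightarrow>
     (\<forall>\<phi> D\<phi>. C1c_grad \<phi> D\<phi> \<longrightarrow>
        (\<integral>x. w x * norm (Du x) powr (p - 2) * (Du x \<bullet> D\<phi> x) \<partial>lborel)
        - (\<integral>x. f (u x) * \<phi> x \<partial>lborel) = 0)"

text \<open>Stability, with f' the derivative of f. (0 powr a = 0, consistent with the
  convention that the integrands vanish where Du = 0.)\<close>
definition stable ::
  "real \<Rightarrow> ('a::euclidean_space \<Rightarrow> real) \<Rightarrow> (real \<Rightarrow> real) \<Rightarrow> ('a \<Rightarrow> real) \<Rightarrow> ('a \<Rightarrow> 'a) \<Rightarrow> bool" where
  "stable p w f' u Du \<longleftrightarrow>
     (\<forall>\<phi> D\<phi>. C1c_grad \<phi> D\<phi> \<longrightarrow>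
        (\<integral>x. w x * norm (Du x) powr (p - 2) * (norm (D\<phi> x))\<^sup>2 \<partial>lborel)
        + (p - 2) * (\<integral>x. w x * norm (Du x) powr (p - 4) * (Du x \<bullet> D\<phi> x)\<^sup>2 \<partial>lborel)
        - (\<integral>x. f' (u x) * (\<phi> x)\<^sup>2 \<partial>lborel) \<ge> 0)"

end

theory Submission
  imports Defs
begin

lemma young_eps:
  fixes r q \<delta> :: real
  assumes r: "r > 1" and q: "q > 1" and rq: "1/r + 1/q = 1" and d: "\<delta> > 0"
  shows "\<exists>K>0. \<forall>a b. a \<ge> 0 \<longrightarrow> b \<ge> 0 \<longrightarrow> a * b \<le> \<delta> * a powr r + K * b powr q"
proof -
  define k where "k = (\<delta> * r) powr (1/r)"
  have k0: "k > 0" using d r by (simp add: k_def)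
  have kr: "k powr r = \<delta> * r" using d r by (simp add: k_def powr_powr)
  show ?thesis
  proof (intro exI[of _ "1 / (q * k powr q)"] conjI allI impI)
    show "0 < 1 / (q * k powr q)" using q k0 by simp
    fix a b :: real assume a: "a \<ge> 0" and b: "b \<ge> 0"
    have "a * b = (k * a) * (b / k)" using k0 by simp
    also have "\<dots> \<le> (k*a) powr r / r + (b/k) powr q / q"
      by (rule Youngs_inequality[OF r q rq]) (use a b k0 in auto)
    also have "(k*a) powr r / r = \<delta> * a powr r"
      using a k0 r by (simp add: powr_mult kr)
    also have "(b/k) powr q / q = 1 / (q * k powr q) * b powr q"
      using b k0 by (simp add: powr_divide)
    finally show "a * b \<le> \<delta> * a powr r + 1 / (q * k powr q) * b powr q" .
  qed
qed

lemma maxpow_deriv: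
  fixes m :: nat assumes m: "m \<ge> 2"
  shows "((\<lambda>t::real. (max 0 t)^m) has_real_derivative (real m * (max 0 t)^(m-1))) (at t)"
proof (cases "t > 0")
  case True
  have "((\<lambda>t::real. t^m) has_real_derivative (real m * t^(m-1))) (at t)"
    using DERIV_pow[of m t] by simp
  then have "((\<lambda>t::real. (max 0 t)^m) has_real_derivative (real m * t^(m-1))) (at t)"
    by (rule has_field_derivative_transform_within_open[where S="{0<..}"]) (use True in auto)
  then show ?thesis using True by simp
next
  case False
  show ?thesis
  proof (cases "t < 0")
    case True
    have "((\<lambda>t::real. 0) has_real_derivative 0) (at t)" by simp
    then have "((\<lambda>t::real. (max 0 t)^m) has_real_derivative 0) (at t)"
      by (rule has_field_derivative_transform_within_open[where S="{..<0}"]) (use True m in auto)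
    moreover have "real m * (max 0 t)^(m-1) = 0" using m True by (simp add: power_0_left)
    ultimately show ?thesis by metis
  next
    case False2: False
    then have t0: "t = 0" using False by simp
    have "((\<lambda>y. ((max 0 y)^m - (max 0 0)^m) / (y - 0)) \<longlongrightarrow> (0::real)) (at 0)"
    proof (rule Lim_null_comparison)
      show "\<forall>\<^sub>F y in at 0. norm (((max 0 y)^m - (max 0 0)^m) / (y - 0)) \<le> \<bar>y\<bar>^(m-1)"
      proof (rule always_eventually, intro allI)
        fix y :: real
        have "\<bar>max 0 y\<bar> \<le> \<bar>y\<bar>" by simp
        then have "\<bar>max 0 y\<bar>^m \<le> \<bar>y\<bar>^m" by (rule power_mono) simp
        moreover have "\<bar>y\<bar>^m = \<bar>y\<bar> * \<bar>y\<bar>^(m-1)" using m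
          by (metis Suc_diff_le Suc_le_D diff_Suc_1 le_trans one_le_numeral power_Suc)
        moreover have "0 < m" using m by simp
        ultimately show "norm (((max 0 y)^m - (max 0 0)^m) / (y - 0)) \<le> \<bar>y\<bar>^(m-1)"
          using m by (cases "y = 0") (auto simp: abs_mult power_abs divide_le_eq field_simps zero_power)
      qed
      show "((\<lambda>y::real. \<bar>y\<bar>^(m-1)) \<longlongrightarrow> 0) (at 0)"
      proof -
        have "((\<lambda>y::real. \<bar>y\<bar>^(m-1)) \<longlongrightarrow> \<bar>0\<bar>^(m-1)) (at 0)"
          by (intro tendsto_intros)
        moreover have "(0::real)^(m-1)=0" by (rule zero_power) (use m in simp)
        ultimately show ?thesis by (metis abs_zero)
      qed
    qed
    then have "((\<lambda>t::real. (max 0 t)^m) has_real_derivative 0) (at 0)"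
      by (simp add: has_field_derivative_iff)
    moreover have "real m * (max 0 t)^(m-1) = 0" using m t0 by (simp add: power_0_left)
    ultimately show ?thesis using t0 by metis
  qed
qed


lemma Y1:
  fixes p \<epsilon> :: real and m :: nat
  assumes p: "p > 2" and mp: "2 * real m > p" and e: "\<epsilon> > 0"
  shows "\<exists>K>0. \<forall>g y d R. 0 \<le> g \<longrightarrow> 0 \<le> y \<longrightarrow> 0 < R \<longrightarrow> 0 \<le> d \<longrightarrow>
     d \<le> real m * y^(m-1) / R \<longrightarrow>
     g powr (p-2) * d^2 \<le> \<epsilon> * (g powr p * y^(2*m)) + K * (R powr (-p) * y powr (2*real m - p))"
proof -
  have m2: "m \<ge> 2" using mp p by linarith
  have r: "p/(p-2) > 1" and q: "p/2 > 1" and rq: "1/(p/(p-2)) + 1/(p/2) = 1"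
    using p by (auto simp: field_simps)
  obtain K0 where K0: "K0 > 0" and Y: "\<And>a b. a \<ge> 0 \<Longrightarrow> b \<ge> 0 \<Longrightarrow>
      a * b \<le> \<epsilon> * a powr (p/(p-2)) + K0 * b powr (p/2)"
    using young_eps[OF r q rq e] by blast
  show ?thesis
  proof (intro exI[of _ "K0 * real m powr p"] conjI allI impI)
    show "0 < K0 * real m powr p" using K0 m2 by simp
    fix g y d R :: real
    assume g: "0 \<le> g" and y: "0 \<le> y" and R: "0 < R" and d: "0 \<le> d"
      and dle: "d \<le> real m * y^(m-1) / R"
    have rhs0: "0 \<le> \<epsilon> * (g powr p * y^(2*m)) + K0 * real m powr p * (R powr (-p) * y powr (2*real m - p))"
      using e g y K0 by (intro add_nonneg_nonneg mult_nonneg_nonneg) auto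
    show "g powr (p-2) * d^2 \<le> \<epsilon> * (g powr p * y^(2*m)) + K0 * real m powr p * (R powr (-p) * y powr (2*real m - p))"
    proof (cases "y = 0")
      case True
      have z: "y^(m-1) = 0" using True m2 by (simp add: power_eq_0_iff)
      have "real m * y^(m-1) / R = 0" by (simp only: z mult_zero_right div_0)
      then have "d = 0" using dle d by linarith
      then show ?thesis using rhs0 by simp
    next
      case False
      then have y0: "y > 0" using y by simp
      define s where "s = 2 * real m * (p-2) / p"
      define a where "a = g powr (p-2) * y powr s"
      define b where "b = d^2 * y powr (-s)"
      have ab: "a * b = g powr (p-2) * d^2"
        using y0 by (simp add: a_def b_def powr_minus field_simps)
      have ar: "a powr (p/(p-2)) = g powr p * y^(2*m)"
      proof -
        have "a powr (p/(p-2)) = (g powr (p-2)) powr (p/(p-2)) * (y powr s) powr (p/(p-2))"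
          unfolding a_def using g y by (simp add: powr_mult)
        also have "\<dots> = g powr p * y powr (2 * real m)"
        proof -
          have e1: "(p-2)*(p/(p-2)) = p" and e2: "s*(p/(p-2)) = 2*real m"
            using p by (auto simp: s_def field_simps)
          show ?thesis by (simp only: powr_powr e1 e2)
        qed
        also have "y powr (2 * real m) = y^(2*m)"
          using y0 by (simp add: powr_realpow[symmetric])
        finally show ?thesis .
      qed
      have bq: "b powr (p/2) = d powr p * y powr (-(real m * (p-2)))"
      proof -
        have "b powr (p/2) = (d^2) powr (p/2) * (y powr (-s)) powr (p/2)"
          unfolding b_def using d y by (simp add: powr_mult)
        also have "(d^2) powr (p/2) = d powr p"
        proof (cases "d = 0")
          case True then show ?thesis using p by simp
        next
          case False
          then have "d^2 = d powr 2" using d by (simp add: powr_realpow)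
          then show ?thesis by (simp add: powr_powr)
        qed
        also have "(y powr (-s)) powr (p/2) = y powr (-(real m * (p-2)))"
        proof -
          have e2: "-s*(p/2) = -(real m*(p-2))"
            using p by (auto simp: s_def field_simps)
          show ?thesis by (simp only: powr_powr e2)
        qed
        finally show ?thesis .
      qed
      have dp: "d powr p \<le> real m powr p * y powr ((real m - 1) * p) * R powr (-p)"
      proof -
        have "d powr p \<le> (real m * y^(m-1) / R) powr p"
          using dle d p by (intro powr_mono2) auto
        also have "\<dots> = real m powr p * (y^(m-1)) powr p / R powr p"
          using y R by (simp add: powr_mult powr_divide)
        also have "(y^(m-1)) powr p = y powr ((real m - 1) * p)"
        proof -
          have "y^(m-1) = y powr (real (m-1))" using y0 by (simp add: powr_realpow)
          then show ?thesis using m2 by (simp add: powr_powr of_nat_diff)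
        qed
        finally show ?thesis by (simp add: powr_minus divide_inverse)
      qed
      have "g powr (p-2) * d^2 = a * b" using ab by simp
      also have "\<dots> \<le> \<epsilon> * a powr (p/(p-2)) + K0 * b powr (p/2)"
        by (rule Y) (use g y d in \<open>auto simp: a_def b_def\<close>)
      also have "K0 * b powr (p/2) \<le> K0 * (real m powr p * y powr ((real m - 1) * p) * R powr (-p) * y powr (-(real m * (p-2))))"
        unfolding bq using dp K0 by (intro mult_left_mono mult_right_mono) auto
      also have "real m powr p * y powr ((real m - 1) * p) * R powr (-p) * y powr (-(real m * (p-2)))
          = real m powr p * (R powr (-p) * y powr (2*real m - p))"
        using y0 by (simp add: powr_add[symmetric] algebra_simps)
      finally show ?thesis unfolding ar by (simp add: mult.assoc)
    qed
  qed
qed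


lemma Y2:
  fixes p \<epsilon> :: real and m :: nat
  assumes p: "p > 2" and mp: "2 * real m > p" and e: "\<epsilon> > 0"
  shows "\<exists>K>0. \<forall>g y d R. 0 \<le> g \<longrightarrow> 0 \<le> y \<longrightarrow> 0 < R \<longrightarrow> 0 \<le> d \<longrightarrow>
     d \<le> real m * y^(m-1) / R \<longrightarrow>
     g powr (p-1) * (y^m * d) \<le> \<epsilon> * (g powr p * y^(2*m)) + K * (R powr (-p) * y powr (2*real m - p))"
proof -
  have m2: "m \<ge> 2" using mp p by linarith
  have r: "p/(p-1) > 1" and q: "p > 1" and rq: "1/(p/(p-1)) + 1/p = 1"
    using p by (auto simp: field_simps)
  obtain K0 where K0: "K0 > 0" and Y: "\<And>a b. a \<ge> 0 \<Longrightarrow> b \<ge> 0 \<Longrightarrow>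
      a * b \<le> \<epsilon> * a powr (p/(p-1)) + K0 * b powr p"
    using young_eps[OF r q rq e] by blast
  show ?thesis
  proof (intro exI[of _ "K0 * real m powr p"] conjI allI impI)
    show "0 < K0 * real m powr p" using K0 m2 by simp
    fix g y d R :: real
    assume g: "0 \<le> g" and y: "0 \<le> y" and R: "0 < R" and d: "0 \<le> d"
      and dle: "d \<le> real m * y^(m-1) / R"
    have rhs0: "0 \<le> \<epsilon> * (g powr p * y^(2*m)) + K0 * real m powr p * (R powr (-p) * y powr (2*real m - p))"
      using e g y K0 by (intro add_nonneg_nonneg mult_nonneg_nonneg) auto
    show "g powr (p-1) * (y^m * d) \<le> \<epsilon> * (g powr p * y^(2*m)) + K0 * real m powr p * (R powr (-p) * y powr (2*real m - p))"
    proof (cases "y = 0")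
      case True
      have z: "y^m = 0" using True m2 by (simp add: power_eq_0_iff)
      have "g powr (p-1) * (y^m * d) = 0" by (simp only: z mult_zero_right mult_zero_left)
      then show ?thesis using rhs0 by linarith
    next
      case False
      then have y0: "y > 0" using y by simp
      define s where "s = 2 * real m * (p-1) / p"
      define a where "a = g powr (p-1) * y powr s"
      define b where "b = y^m * d * y powr (-s)"
      have ab: "a * b = g powr (p-1) * (y^m * d)"
        using y0 by (simp add: a_def b_def powr_minus field_simps)
      have ar: "a powr (p/(p-1)) = g powr p * y^(2*m)"
      proof -
        have "a powr (p/(p-1)) = (g powr (p-1)) powr (p/(p-1)) * (y powr s) powr (p/(p-1))"
          unfolding a_def using g y by (simp add: powr_mult)
        also have "\<dots> = g powr p * y powr (2 * real m)"
        proof -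
          have e1: "(p-1)*(p/(p-1)) = p" and e2: "s*(p/(p-1)) = 2*real m"
            using p by (auto simp: s_def field_simps)
          show ?thesis by (simp only: powr_powr e1 e2)
        qed
        also have "y powr (2 * real m) = y^(2*m)"
          using y0 by (simp add: powr_realpow[symmetric])
        finally show ?thesis .
      qed
      have ym: "y^m = y powr (real m)" using y0 by (simp add: powr_realpow)
      have bq: "b powr p = y powr (real m * p) * d powr p * y powr (-(s*p))"
        unfolding b_def using d y y0 by (simp add: powr_mult ym powr_powr)
      have dp: "d powr p \<le> real m powr p * y powr ((real m - 1) * p) * R powr (-p)"
      proof -
        have "d powr p \<le> (real m * y^(m-1) / R) powr p"
          using dle d p by (intro powr_mono2) auto
        also have "\<dots> = real m powr p * (y^(m-1)) powr p / R powr p"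
          using y R by (simp add: powr_mult powr_divide)
        also have "(y^(m-1)) powr p = y powr ((real m - 1) * p)"
        proof -
          have "y^(m-1) = y powr (real (m-1))" using y0 by (simp add: powr_realpow)
          then show ?thesis using m2 by (simp add: powr_powr of_nat_diff)
        qed
        finally show ?thesis by (simp add: powr_minus divide_inverse)
      qed
      have "g powr (p-1) * (y^m * d) = a * b" using ab by simp
      also have "\<dots> \<le> \<epsilon> * a powr (p/(p-1)) + K0 * b powr p"
        by (rule Y) (use g y d in \<open>auto simp: a_def b_def\<close>)
      also have "K0 * b powr p \<le> K0 * (y powr (real m * p) * (real m powr p * y powr ((real m - 1) * p) * R powr (-p)) * y powr (-(s*p)))"
        unfolding bq using dp K0 by (intro mult_left_mono mult_right_mono) auto
      also have "y powr (real m * p) * (real m powr p * y powr ((real m - 1) * p) * R powr (-p)) * y powr (-(s*p))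
          = real m powr p * (R powr (-p) * y powr (real m * p + (real m - 1) * p + (-(s*p))))"
      proof -
        have "y powr (real m * p + (real m - 1) * p + (-(s*p))) = y powr (real m * p) * y powr ((real m - 1) * p) * y powr (-(s*p))"
          by (simp only: powr_add)
        then show ?thesis by (simp only: mult_ac)
      qed
      also have "real m * p + (real m - 1) * p + (-(s*p)) = 2*real m - p"
        using p by (simp add: s_def field_simps)
      finally show ?thesis unfolding ar by (simp add: mult.assoc)
    qed
  qed
qed

lemma Y3:
  fixes p \<alpha> \<theta> :: real and m :: nat
  assumes p: "p > 2" and a: "\<alpha> > 0" and mp: "2 * real m \<ge> p * (2*\<alpha>+1)" and th: "\<theta> > 0"
  shows "\<exists>K>0. \<forall>\<omega> v y R. 0 < \<omega> \<longrightarrow> 0 \<le> y \<longrightarrow> y \<le> 1 \<longrightarrow> 0 < R \<longrightarrow>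
     \<omega> * exp (2*\<alpha> * v) * (R powr (-p) * y powr (2*real m - p)) \<le>
       \<theta> * (exp ((2*\<alpha>+1) * v) * y^(2*m)) + K * (R powr (-p*(2*\<alpha>+1)) * \<omega> powr (2*\<alpha>+1)) * (if y > 0 then 1 else 0)"
proof -
  have r: "(2*\<alpha>+1)/(2*\<alpha>) > 1" and q: "2*\<alpha>+1 > 1" and rq: "1/((2*\<alpha>+1)/(2*\<alpha>)) + 1/(2*\<alpha>+1) = 1"
    using a by (auto simp: field_simps)
  obtain K0 where K0: "K0 > 0" and Y: "\<And>a b. a \<ge> 0 \<Longrightarrow> b \<ge> 0 \<Longrightarrow>
      a * b \<le> \<theta> * a powr ((2*\<alpha>+1)/(2*\<alpha>)) + K0 * b powr (2*\<alpha>+1)"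
    using young_eps[OF r q rq th] by blast
  have mp2: "2 * real m - p > 0" using mp p a
    by (smt (verit, best) mult_less_cancel_left1)
  show ?thesis
  proof (intro exI[of _ K0] conjI allI impI)
    show "0 < K0" using K0 .
    fix \<omega> v y R :: real
    assume w: "0 < \<omega>" and y: "0 \<le> y" and y1: "y \<le> 1" and R: "0 < R"
    show "\<omega> * exp (2*\<alpha> * v) * (R powr (-p) * y powr (2*real m - p)) \<le>
       \<theta> * (exp ((2*\<alpha>+1) * v) * y^(2*m)) + K0 * (R powr (-p*(2*\<alpha>+1)) * \<omega> powr (2*\<alpha>+1)) * (if y > 0 then 1 else 0)"
    proof (cases "y = 0")
      case True
      then show ?thesis using th by simp
    next
      case False
      then have y0: "y > 0" using y by simp
      define t where "t = 4 * \<alpha> * real m / (2*\<alpha>+1)"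
      define A where "A = exp (2*\<alpha> * v) * y powr t"
      define B where "B = \<omega> * R powr (-p) * y powr (2 * real m - p - t)"
      have ab: "A * B = \<omega> * exp (2*\<alpha> * v) * (R powr (-p) * y powr (2*real m - p))"
        using y0 by (simp add: A_def B_def powr_diff powr_add field_simps)
      have ar: "A powr ((2*\<alpha>+1)/(2*\<alpha>)) = exp ((2*\<alpha>+1) * v) * y^(2*m)"
      proof -
        have "A powr ((2*\<alpha>+1)/(2*\<alpha>)) = (exp (2*\<alpha> * v)) powr ((2*\<alpha>+1)/(2*\<alpha>)) * (y powr t) powr ((2*\<alpha>+1)/(2*\<alpha>))"
          unfolding A_def using y by (simp add: powr_mult)
        also have "(exp (2*\<alpha> * v)) powr ((2*\<alpha>+1)/(2*\<alpha>)) = exp ((2*\<alpha>+1) * v)"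
          using a by (simp add: powr_def field_simps)
        also have "(y powr t) powr ((2*\<alpha>+1)/(2*\<alpha>)) = y powr (2 * real m)"
        proof -
          have "2*\<alpha>+1 > 0" using a by simp
          then have e2: "t*((2*\<alpha>+1)/(2*\<alpha>)) = 2*real m" using a by (simp add: t_def)
          show ?thesis by (simp only: powr_powr e2)
        qed
        also have "y powr (2 * real m) = y^(2*m)"
          using y0 by (simp add: powr_realpow[symmetric])
        finally show ?thesis .
      qed
      have bq: "B powr (2*\<alpha>+1) \<le> R powr (-p*(2*\<alpha>+1)) * \<omega> powr (2*\<alpha>+1)"
      proof -
        have "B powr (2*\<alpha>+1) = \<omega> powr (2*\<alpha>+1) * (R powr (-p)) powr (2*\<alpha>+1) * (y powr (2 * real m - p - t)) powr (2*\<alpha>+1)"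
          unfolding B_def using w R y by (simp add: powr_mult)
        also have "(R powr (-p)) powr (2*\<alpha>+1) = R powr (-p*(2*\<alpha>+1))" by (simp add: powr_powr)
        also have "(y powr (2 * real m - p - t)) powr (2*\<alpha>+1) = y powr (2*real m - p*(2*\<alpha>+1))"
        proof -
          have "2*\<alpha>+1 > 0" using a by simp
          then have ht: "t*(2*\<alpha>+1) = 4*\<alpha>*real m" using a by (simp add: t_def)
          have e2: "(2 * real m - p - t)*(2*\<alpha>+1) = 2*real m - p*(2*\<alpha>+1)"
            by (simp only: left_diff_distrib ht) (simp add: algebra_simps)
          show ?thesis by (simp only: powr_powr e2)
        qed
        also have "y powr (2*real m - p*(2*\<alpha>+1)) \<le> 1"
          using y0 y1 mp by (intro powr_le1) auto
        finally show ?thesis using w R by (simp add: mult_left_le mult.commute)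
      qed
      have "\<omega> * exp (2*\<alpha> * v) * (R powr (-p) * y powr (2*real m - p)) = A * B" using ab by simp
      also have "\<dots> \<le> \<theta> * A powr ((2*\<alpha>+1)/(2*\<alpha>)) + K0 * B powr (2*\<alpha>+1)"
        by (rule Y) (use w R in \<open>auto simp: A_def B_def\<close>)
      also have "K0 * B powr (2*\<alpha>+1) \<le> K0 * (R powr (-p*(2*\<alpha>+1)) * \<omega> powr (2*\<alpha>+1))"
        using bq K0 by simp
      finally show ?thesis unfolding ar using y0 by simp
    qed
  qed
qed


lemma alg:
  fixes p \<alpha> \<epsilon> K1 K2 I J K E T \<beta> \<gamma> :: real
  assumes p: "p > 2" and a0: "\<alpha> > 0"
    and bdef: "\<beta> = (p-1)*\<alpha> - 1" and b0: "\<beta> > 0"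
    and gdef: "\<gamma> = \<alpha> * (2 - (p-1)*\<alpha>)" and g0: "\<gamma> > 0"
    and e0: "\<epsilon> > 0" and eps: "(2*\<beta> + p - 1) * \<epsilon> \<le> \<gamma>/2"
    and K1: "K1 \<ge> 0" and K2: "K2 \<ge> 0"
    and I0: "I \<ge> 0" and T0: "T \<ge> 0"
    and hE: "2*\<alpha>*I + 2*J = E"
    and hS: "E \<le> (p-1) * (\<alpha>^2 * I + 2*\<alpha>*J + K)"
    and hK: "K \<le> \<epsilon>*I + K1*T"
    and hJ: "J \<le> \<epsilon>*I + K2*T"
  shows "E \<le> ((2*\<alpha>+2*\<epsilon>) * (2*(2*\<beta>*K2 + (p-1)*K1)/\<gamma>) + 2*K2) * T"
proof -
  have J: "J = (E - 2*\<alpha>*I)/2" using hE by simp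
  have s1: "(p-1)*\<alpha>^2 * I \<le> \<beta>*E + (p-1)*K"
  proof -
    have "E \<le> (p-1) * (\<alpha>^2 * I + \<alpha>*(E - 2*\<alpha>*I) + K)" using hS J by simp
    then show ?thesis unfolding bdef by (simp add: algebra_simps power2_eq_square)
  qed
  have s2: "E \<le> (2*\<alpha>+2*\<epsilon>)*I + 2*K2*T" using hE hJ by (simp add: algebra_simps)
  have s3: "\<beta>*E \<le> \<beta>*((2*\<alpha>+2*\<epsilon>)*I + 2*K2*T)" using s2 b0 by (simp add: mult_left_mono)
  have s4: "(p-1)*K \<le> (p-1)*(\<epsilon>*I + K1*T)" using hK p by (simp add: mult_left_mono)
  have s5: "(p-1)*\<alpha>^2 * I \<le> \<beta>*((2*\<alpha>+2*\<epsilon>)*I + 2*K2*T) + (p-1)*(\<epsilon>*I + K1*T)"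
    using s1 s3 s4 by linarith
  have s6: "(\<gamma> - (2*\<beta> + p - 1)*\<epsilon>) * I \<le> (2*\<beta>*K2 + (p-1)*K1) * T"
    using s5 unfolding gdef bdef by (simp add: algebra_simps power2_eq_square)
  have s7: "(\<gamma>/2) * I \<le> (\<gamma> - (2*\<beta> + p - 1)*\<epsilon>) * I" using eps I0 by (intro mult_right_mono) auto
  have s8: "I \<le> (2*(2*\<beta>*K2 + (p-1)*K1)/\<gamma>) * T"
  proof -
    have "(\<gamma>/2) * I \<le> (2*\<beta>*K2 + (p-1)*K1) * T" using s6 s7 by linarith
    then show ?thesis using g0 by (simp add: field_simps)
  qed
  have "E \<le> (2*\<alpha>+2*\<epsilon>)*((2*(2*\<beta>*K2 + (p-1)*K1)/\<gamma>) * T) + 2*K2*T"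
    using s2 s8 a0 e0 by (smt (verit) mult_left_mono)
  then show ?thesis by (simp add: algebra_simps)
qed


lemma grad_cont:
  assumes "is_gradient f Df" shows "continuous_on UNIV f"
  using assms unfolding is_gradient_def
  by (meson continuous_at_imp_continuous_on has_derivative_continuous)

lemma grad_mult:
  assumes "is_gradient f Df" "is_gradient g Dg"
  shows "is_gradient (\<lambda>x. f x * g x) (\<lambda>x. f x *\<^sub>R Dg x + g x *\<^sub>R Df x)"
  unfolding is_gradient_def
proof
  fix x
  have f: "(f has_derivative (\<lambda>h. Df x \<bullet> h)) (at x)" and g: "(g has_derivative (\<lambda>h. Dg x \<bullet> h)) (at x)"
    using assms unfolding is_gradient_def by auto
  show "((\<lambda>x. f x * g x) has_derivative (\<lambda>h. (f x *\<^sub>R Dg x + g x *\<^sub>R Df x) \<bullet> h)) (at x)"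
    by (rule has_derivative_eq_rhs[OF has_derivative_mult[OF f g]])
       (auto simp: inner_add_left algebra_simps)
qed

lemma grad_exp:
  assumes "is_gradient f Df"
  shows "is_gradient (\<lambda>x. exp (c * f x)) (\<lambda>x. (c * exp (c * f x)) *\<^sub>R Df x)"
  unfolding is_gradient_def
proof
  fix x
  have f: "(f has_derivative (\<lambda>h. Df x \<bullet> h)) (at x)"
    using assms unfolding is_gradient_def by auto
  have cf: "((\<lambda>x. c * f x) has_derivative (\<lambda>h. c * (Df x \<bullet> h))) (at x)"
    by (intro derivative_intros f)
  show "((\<lambda>x. exp (c * f x)) has_derivative (\<lambda>h. ((c * exp (c * f x)) *\<^sub>R Df x) \<bullet> h)) (at x)"
    by (rule has_derivative_eq_rhs[OF DERIV_compose_FDERIV[OF DERIV_exp cf]])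
       (auto simp: algebra_simps)
qed

lemma supp_compact:
  fixes f :: "'a::euclidean_space \<Rightarrow> real"
  assumes "\<And>x. norm x \<ge> r \<Longrightarrow> f x = 0"
  shows "compact (closure {x. f x \<noteq> 0})"
proof -
  have "{x. f x \<noteq> 0} \<subseteq> ball 0 r" using assms by (force simp: not_le)
  then have "bounded {x. f x \<noteq> 0}" using bounded_ball bounded_subset by blast
  then show ?thesis by simp
qed

lemma integrable_supp:
  fixes f :: "'a::euclidean_space \<Rightarrow> real"
  assumes "continuous_on UNIV f" "\<And>x. norm x \<ge> r \<Longrightarrow> f x = 0"
  shows "integrable lborel f"
proof -
  have "integrable lborel (\<lambda>x. indicator (cball 0 r) x *\<^sub>R f x)"
    by (rule borel_integrable_compact) (auto intro: continuous_on_subset[OF assms(1)])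
  moreover have "(\<lambda>x. indicator (cball 0 r) x *\<^sub>R f x) = f"
  proof
    fix x show "indicator (cball 0 r) x *\<^sub>R f x = f x"
      using assms(2)[of x] by (cases "x \<in> cball 0 r") auto
  qed
  ultimately show ?thesis by simp
qed

definition eta :: "real \<Rightarrow> 'a::euclidean_space \<Rightarrow> real" where
  "eta R x = max 0 (1 - (x \<bullet> x) / (4 * R^2))"

definition Dpsi :: "real \<Rightarrow> nat \<Rightarrow> 'a::euclidean_space \<Rightarrow> 'a" where
  "Dpsi R m x = (- (real m * (eta R x)^(m-1) / (2 * R^2))) *\<^sub>R x"

lemma eta_cont: "R > 0 \<Longrightarrow> continuous_on UNIV (eta R)"
  unfolding eta_def by (intro continuous_intros) auto

lemma eta_ge0: "eta R x \<ge> 0" by (simp add: eta_def)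

lemma eta_le1: "R > 0 \<Longrightarrow> eta R x \<le> 1" by (simp add: eta_def)

lemma eta_zero: assumes "R > 0" "norm x \<ge> 2 * R" shows "eta R x = 0"
proof -
  have "(2*R)^2 \<le> (norm x)^2" using assms by (intro power_mono) auto
  then have "4 * R^2 \<le> x \<bullet> x" by (simp add: power2_norm_eq_inner power_mult_distrib)
  then have "(x \<bullet> x) / (4 * R^2) \<ge> 1" using assms by simp
  then show ?thesis by (simp add: eta_def)
qed

lemma eta_pos: assumes "R > 0" "norm x < 2 * R" shows "eta R x > 0"
proof -
  have "(norm x)^2 < (2*R)^2" using assms by (intro power_strict_mono) auto
  then have "x \<bullet> x < 4 * R^2" by (simp add: power2_norm_eq_inner power_mult_distrib)
  then have "(x \<bullet> x) / (4 * R^2) < 1" using assms by simp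
  then show ?thesis by (simp add: eta_def)
qed

lemma psi_grad:
  assumes R: "R > 0" and m: "m \<ge> 2"
  shows "is_gradient (\<lambda>x. (eta R x)^m) (Dpsi R m)"
  unfolding is_gradient_def
proof
  fix x :: 'a
  have g: "((\<lambda>x. 1 - (x \<bullet> x) / (4 * R^2)) has_derivative (\<lambda>h. - ((x \<bullet> h + h \<bullet> x) / (4 * R^2)))) (at x)"
    by (intro derivative_eq_intros) (use R in auto)
  show "((\<lambda>x. (eta R x)^m) has_derivative (\<lambda>h. Dpsi R m x \<bullet> h)) (at x)"
    unfolding eta_def
    by (rule has_derivative_eq_rhs[OF DERIV_compose_FDERIV[OF maxpow_deriv[OF m] g]])
       (use R in \<open>auto simp: Dpsi_def eta_def inner_commute field_simps power2_eq_square\<close>)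
qed

lemma Dpsi_cont: "R > 0 \<Longrightarrow> continuous_on UNIV (Dpsi R m)"
  unfolding Dpsi_def by (intro continuous_intros eta_cont) auto

lemma Dpsi_zero: "R > 0 \<Longrightarrow> m \<ge> 2 \<Longrightarrow> norm x \<ge> 2*R \<Longrightarrow> Dpsi R m x = 0"
  by (simp add: Dpsi_def eta_zero)

lemma Dpsi_bound:
  assumes R: "R > 0" and m: "m \<ge> 2"
  shows "norm (Dpsi R m x) \<le> real m * (eta R x)^(m-1) / R"
proof (cases "norm x < 2 * R")
  case True
  have "norm (Dpsi R m x) = real m * (eta R x)^(m-1) / (2 * R^2) * norm x"
    by (simp add: Dpsi_def eta_ge0)
  also have "\<dots> \<le> real m * (eta R x)^(m-1) / (2 * R^2) * (2 * R)"
    using True by (intro mult_left_mono) (auto simp: eta_ge0)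
  also have "\<dots> = real m * (eta R x)^(m-1) / R" using R by (simp add: power2_eq_square)
  finally show ?thesis .
next
  case False
  then show ?thesis using Dpsi_zero[OF R m, of x] R by (simp add: eta_ge0)
qed


lemma gp2: assumes "(g::real) \<ge> 0" shows "g powr (p-2) * g^2 = g powr p"
proof (cases "g = 0")
  case False
  then have "g > 0" using assms by simp
  then have "g^2 = g powr 2" by (simp add: powr_realpow)
  then show ?thesis by (simp add: powr_add[symmetric])
qed simp

lemma gp1: assumes "(g::real) \<ge> 0" shows "g powr (p-2) * g = g powr (p-1)"
proof (cases "g = 0")
  case False
  then have "g > 0" using assms by simp
  have "g powr (p-1) = g powr ((p-2) + 1)" by simp
  also have "\<dots> = g powr (p-2) * g powr 1" by (rule powr_add)
  also have "g powr 1 = g" using assms by simp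
  finally show ?thesis by simp
qed simp

lemma gp4:
  fixes g c D :: real
  assumes g: "g \<ge> 0" and c: "\<bar>c\<bar> \<le> g * D"
  shows "g powr (p-4) * c^2 \<le> g powr (p-2) * D^2"
proof (cases "g = 0")
  case True
  then show ?thesis by simp
next
  case False
  then have g0: "g > 0" using g by simp
  have D: "D \<ge> 0" using c g0 by (smt (verit) zero_le_mult_iff)
  have "c^2 \<le> (g*D)^2" using c by (metis abs_ge_zero power2_abs power_mono)
  then have "g powr (p-4) * c^2 \<le> g powr (p-4) * (g^2 * D^2)"
    by (intro mult_left_mono) (auto simp: power_mult_distrib)
  also have "g powr (p-4) * g^2 = g powr (p-2)"
  proof -
    have "g^2 = g powr 2" using g0 by (simp add: powr_realpow)
    then show ?thesis by (simp add: powr_add[symmetric])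
  qed
  then have "g powr (p-4) * (g^2 * D^2) = g powr (p-2) * D^2" by (metis mult.assoc)
  finally show ?thesis .
qed


lemma cont_npowr:
  fixes f :: "'a::topological_space \<Rightarrow> real"
  assumes "continuous_on UNIV f" "\<And>x. f x \<ge> 0" "e > 0"
  shows "continuous_on UNIV (\<lambda>x. f x powr e)"
  by (rule continuous_on_powr') (use assms in auto)

lemma key:
  fixes w u :: "'a::euclidean_space \<Rightarrow> real" and Du :: "'a \<Rightarrow> 'a" and R p \<alpha> \<beta> \<gamma> \<epsilon> K1 K2 K3 C3 \<theta> :: real
    and m :: nat
  assumes p: "p > 2" and cw: "continuous_on UNIV w" and wpos: "\<And>x. w x > 0"
    and gu: "is_gradient u Du" and cDu: "continuous_on UNIV Du"
    and weak: "weak_solution p w exp u Du" and st: "stable p w exp u Du"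
    and a0: "\<alpha> > 0" and m2: "m \<ge> 2" and mp: "2 * real m \<ge> p*(2*\<alpha>+1)" and mp2: "2*real m > p"
    and bdef: "\<beta> = (p-1)*\<alpha> - 1" and b0: "\<beta> > 0"
    and gdef: "\<gamma> = \<alpha> * (2 - (p-1)*\<alpha>)" and g0: "\<gamma> > 0"
    and e0: "\<epsilon> > 0" and eps: "(2*\<beta> + p - 1) * \<epsilon> \<le> \<gamma>/2"
    and K1: "K1 > 0" and K2: "K2 > 0" and K3: "K3 > 0"
    and HY1: "\<forall>g y d R. 0 \<le> g \<longrightarrow> 0 \<le> y \<longrightarrow> 0 < R \<longrightarrow> 0 \<le> d \<longrightarrow>
     d \<le> real m * y^(m-1) / R \<longrightarrow>
     g powr (p-2) * d^2 \<le> \<epsilon> * (g powr p * y^(2*m)) + K1 * (R powr (-p) * y powr (2*real m - p))"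
    and HY2: "\<forall>g y d R. 0 \<le> g \<longrightarrow> 0 \<le> y \<longrightarrow> 0 < R \<longrightarrow> 0 \<le> d \<longrightarrow>
     d \<le> real m * y^(m-1) / R \<longrightarrow>
     g powr (p-1) * (y^m * d) \<le> \<epsilon> * (g powr p * y^(2*m)) + K2 * (R powr (-p) * y powr (2*real m - p))"
    and HY3: "\<forall>\<omega> v y R. 0 < \<omega> \<longrightarrow> 0 \<le> y \<longrightarrow> y \<le> 1 \<longrightarrow> 0 < R \<longrightarrow>
     \<omega> * exp (2 * \<alpha> * v) * (R powr (-p) * y powr (2*real m - p)) \<le>
       \<theta> * (exp ((2*\<alpha>+1) * v) * y^(2*m)) + K3 * (R powr (-p*(2*\<alpha>+1)) * \<omega> powr (2*\<alpha>+1)) * (if y > 0 then 1 else 0)"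
    and C3def: "C3 = (2*\<alpha>+2*\<epsilon>) * (2*(2*\<beta>*K2 + (p-1)*K1)/\<gamma>) + 2*K2"
    and th: "\<theta> = 1/(2*C3)"
    and R: "R > 0"
  shows "(\<integral>x. exp ((2*\<alpha>+1) * u x) * ((eta R x)^m)^2 \<partial>lborel)
     \<le> 2*C3*K3 * (R powr (-p*(2*\<alpha>+1)) * (LINT x : ball 0 (2*R) | lborel. w x powr (2*\<alpha>+1)))"
proof -
  define y where "y = (eta R :: 'a \<Rightarrow> real)"
  define \<psi> where "\<psi> = (\<lambda>x. (y x)^m)"
  define D\<psi> where "D\<psi> = (Dpsi R m :: 'a \<Rightarrow> 'a)"
  have m1: "m - 1 \<ge> 1" "m \<noteq> 0" using m2 by auto
  have cu: "continuous_on UNIV u" using gu by (rule grad_cont)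
  have cy: "continuous_on UNIV y" unfolding y_def using R by (rule eta_cont)
  have c\<psi>: "continuous_on UNIV \<psi>" unfolding \<psi>_def by (intro continuous_intros cy)
  have cD\<psi>: "continuous_on UNIV D\<psi>" unfolding D\<psi>_def using R by (rule Dpsi_cont)
  have g\<psi>: "is_gradient \<psi> D\<psi>" unfolding \<psi>_def D\<psi>_def y_def using R m2 by (rule psi_grad)
  have y0: "\<And>x. y x \<ge> 0" and y1: "\<And>x. y x \<le> 1" unfolding y_def using R by (auto simp: eta_ge0 eta_le1)
  have yz: "\<And>x. norm x \<ge> 2*R \<Longrightarrow> y x = 0" unfolding y_def using R by (auto intro: eta_zero)
  have \<psi>z: "\<And>x. norm x \<ge> 2*R \<Longrightarrow> \<psi> x = 0" unfolding \<psi>_def using yz m1 by simp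
  have D\<psi>z: "\<And>x. norm x \<ge> 2*R \<Longrightarrow> D\<psi> x = 0" unfolding D\<psi>_def using R m2 by (auto intro: Dpsi_zero)
  have D\<psi>b: "\<And>x. norm (D\<psi> x) \<le> real m * (y x)^(m-1) / R" unfolding D\<psi>_def y_def using R m2 by (rule Dpsi_bound)
  have cnorm: "continuous_on UNIV (\<lambda>x. norm (Du x))" by (intro continuous_intros cDu)
  have cgp: "continuous_on UNIV (\<lambda>x. norm (Du x) powr p)" using p by (intro cont_npowr cnorm) auto
  have cgp2: "continuous_on UNIV (\<lambda>x. norm (Du x) powr (p-2))" using p by (intro cont_npowr cnorm) auto
  define fI where "fI = (\<lambda>x. w x * norm (Du x) powr p * exp (2*\<alpha>*u x) * (\<psi> x)^2)"
  define fJ where "fJ = (\<lambda>x. w x * norm (Du x) powr (p-2) * exp (2*\<alpha>*u x) * \<psi> x * (Du x \<bullet> D\<psi> x))"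
  define fK where "fK = (\<lambda>x. w x * norm (Du x) powr (p-2) * exp (2*\<alpha>*u x) * (norm (D\<psi> x))^2)"
  define fE where "fE = (\<lambda>x. exp ((2*\<alpha>+1) * u x) * (\<psi> x)^2)"
  define fT where "fT = (\<lambda>x. w x * exp (2*\<alpha>*u x) * (R powr (-p) * y x powr (2*real m - p)))"
  define fW where "fW = (\<lambda>x. R powr (-p*(2*\<alpha>+1)) * (indicator (ball 0 (2*R)) x *\<^sub>R w x powr (2*\<alpha>+1)))"
  have iI: "integrable lborel fI"
    by (rule integrable_supp[where r="2*R"]) (auto simp: fI_def \<psi>z intro!: continuous_intros cw cgp cu c\<psi>)
  have iJ: "integrable lborel fJ"
    by (rule integrable_supp[where r="2*R"]) (auto simp: fJ_def \<psi>z intro!: continuous_intros cw cgp2 cu c\<psi> cDu cD\<psi>)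
  have iK: "integrable lborel fK"
    by (rule integrable_supp[where r="2*R"]) (auto simp: fK_def D\<psi>z intro!: continuous_intros cw cgp2 cu cD\<psi>)
  have iE: "integrable lborel fE"
    by (rule integrable_supp[where r="2*R"]) (auto simp: fE_def \<psi>z intro!: continuous_intros cu c\<psi>)
  have cyp: "continuous_on UNIV (\<lambda>x. y x powr (2*real m - p))" using mp2 by (intro cont_npowr cy y0) auto
  have iT: "integrable lborel fT"
    by (rule integrable_supp[where r="2*R"]) (use mp2 in \<open>auto simp: fT_def yz intro!: continuous_intros cw cu cyp\<close>)
  have iW: "integrable lborel fW"
  proof -
    have cwp: "continuous_on UNIV (\<lambda>x. w x powr (2*\<alpha>+1))" using a0 wpos by (intro cont_npowr cw) (auto intro: less_imp_le)
    have "set_integrable lborel (cball 0 (2*R)) (\<lambda>x. w x powr (2*\<alpha>+1))"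
      unfolding set_integrable_def by (rule borel_integrable_compact) (auto intro: continuous_on_subset[OF cwp])
    then have "set_integrable lborel (ball 0 (2*R)) (\<lambda>x. w x powr (2*\<alpha>+1))"
      by (rule set_integrable_subset) auto
    then show ?thesis unfolding fW_def set_integrable_def by simp
  qed
  have ipos: "\<And>x. fI x \<ge> 0" unfolding fI_def by (intro mult_nonneg_nonneg) (auto simp: less_imp_le[OF wpos])
  have Tpos: "\<And>x. fT x \<ge> 0" unfolding fT_def by (intro mult_nonneg_nonneg) (auto simp: less_imp_le[OF wpos] y0)
  define \<phi>1 where "\<phi>1 = (\<lambda>x. exp (2*\<alpha> * u x) * (\<psi> x * \<psi> x))"
  define D\<phi>1 where "D\<phi>1 = (\<lambda>x. exp (2*\<alpha> * u x) *\<^sub>R (\<psi> x *\<^sub>R D\<psi> x + \<psi> x *\<^sub>R D\<psi> x)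
      + (\<psi> x * \<psi> x) *\<^sub>R ((2*\<alpha> * exp (2*\<alpha> * u x)) *\<^sub>R Du x))"
  have t1: "C1c_grad \<phi>1 D\<phi>1"
    unfolding C1c_grad_def C1_grad_def
  proof (intro conjI)
    show "is_gradient \<phi>1 D\<phi>1" unfolding \<phi>1_def D\<phi>1_def
      by (rule grad_mult[OF grad_exp[OF gu] grad_mult[OF g\<psi> g\<psi>]])
    show "continuous_on UNIV D\<phi>1" unfolding D\<phi>1_def
      by (intro continuous_intros cu c\<psi> cD\<psi> cDu)
    show "compact (closure {x. \<phi>1 x \<noteq> 0})"
      by (rule supp_compact[where r="2*R"]) (simp add: \<phi>1_def \<psi>z)
  qed
  have W1: "(\<integral>x. w x * norm (Du x) powr (p - 2) * (Du x \<bullet> D\<phi>1 x) \<partial>lborel) - (\<integral>x. exp (u x) * \<phi>1 x \<partial>lborel) = 0"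
    using weak t1 unfolding weak_solution_def by blast
  have P1: "\<And>x. w x * norm (Du x) powr (p - 2) * (Du x \<bullet> D\<phi>1 x) = 2*\<alpha> * fI x + 2 * fJ x"
  proof -
    fix x
    have n2: "Du x \<bullet> Du x = (norm (Du x))^2" by (simp add: power2_norm_eq_inner)
    have gg: "norm (Du x) powr (p-2) * (norm (Du x))^2 = norm (Du x) powr p" by (rule gp2) simp
    have "w x * norm (Du x) powr (p - 2) * (Du x \<bullet> D\<phi>1 x)
       = 2*\<alpha> * (w x * (norm (Du x) powr (p-2) * (norm (Du x))^2) * exp (2*\<alpha>*u x) * (\<psi> x)^2) + 2 * fJ x"
      unfolding D\<phi>1_def fJ_def by (simp add: inner_add_right n2 algebra_simps power2_eq_square)
    then show "w x * norm (Du x) powr (p - 2) * (Du x \<bullet> D\<phi>1 x) = 2*\<alpha> * fI x + 2 * fJ x"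
      unfolding gg fI_def by simp
  qed
  have P2: "\<And>x. exp (u x) * \<phi>1 x = fE x"
    unfolding \<phi>1_def fE_def by (simp add: mult_exp_exp algebra_simps power2_eq_square)
  have hE: "2*\<alpha>*(\<integral>x. fI x \<partial>lborel) + 2*(\<integral>x. fJ x \<partial>lborel) = (\<integral>x. fE x \<partial>lborel)"
  proof -
    have "(\<integral>x. w x * norm (Du x) powr (p - 2) * (Du x \<bullet> D\<phi>1 x) \<partial>lborel) = (\<integral>x. 2*\<alpha> * fI x + 2 * fJ x \<partial>lborel)"
      by (simp add: P1)
    also have "\<dots> = 2*\<alpha>*(\<integral>x. fI x \<partial>lborel) + 2*(\<integral>x. fJ x \<partial>lborel)"
      using iI iJ by simp
    finally show ?thesis using W1 P2 by simp
  qed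
  define \<phi>2 where "\<phi>2 = (\<lambda>x. exp (\<alpha> * u x) * \<psi> x)"
  define D\<phi>2 where "D\<phi>2 = (\<lambda>x. exp (\<alpha> * u x) *\<^sub>R D\<psi> x + \<psi> x *\<^sub>R ((\<alpha> * exp (\<alpha> * u x)) *\<^sub>R Du x))"
  have t2: "C1c_grad \<phi>2 D\<phi>2"
    unfolding C1c_grad_def C1_grad_def
  proof (intro conjI)
    show "is_gradient \<phi>2 D\<phi>2" unfolding \<phi>2_def D\<phi>2_def
      by (rule grad_mult[OF grad_exp[OF gu] g\<psi>])
    show "continuous_on UNIV D\<phi>2" unfolding D\<phi>2_def
      by (intro continuous_intros cu c\<psi> cD\<psi> cDu)
    show "compact (closure {x. \<phi>2 x \<noteq> 0})"
      by (rule supp_compact[where r="2*R"]) (simp add: \<phi>2_def \<psi>z)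
  qed
  have S2: "(\<integral>x. w x * norm (Du x) powr (p - 2) * (norm (D\<phi>2 x))\<^sup>2 \<partial>lborel)
        + (p - 2) * (\<integral>x. w x * norm (Du x) powr (p - 4) * (Du x \<bullet> D\<phi>2 x)\<^sup>2 \<partial>lborel)
        - (\<integral>x. exp (u x) * (\<phi>2 x)\<^sup>2 \<partial>lborel) \<ge> 0"
    using st t2 unfolding stable_def by blast
  have P3: "\<And>x. w x * norm (Du x) powr (p - 2) * (norm (D\<phi>2 x))\<^sup>2 = \<alpha>^2 * fI x + 2*\<alpha> * fJ x + fK x"
  proof -
    fix x
    have n2: "Du x \<bullet> Du x = (norm (Du x))^2" by (simp add: power2_norm_eq_inner)
    have n3: "D\<psi> x \<bullet> D\<psi> x = (norm (D\<psi> x))^2" by (simp add: power2_norm_eq_inner)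
    have ee: "exp (\<alpha> * u x) * exp (\<alpha> * u x) = exp (2*\<alpha>*u x)" by (simp add: mult_exp_exp)
    have gg: "norm (Du x) powr (p-2) * (norm (Du x))^2 = norm (Du x) powr p" by (rule gp2) simp
    have "w x * norm (Du x) powr (p - 2) * (norm (D\<phi>2 x))\<^sup>2
       = \<alpha>^2 * (w x * (norm (Du x) powr (p-2) * (norm (Du x))^2) * (exp (\<alpha> * u x) * exp (\<alpha> * u x)) * (\<psi> x)^2)
         + 2*\<alpha> * (w x * norm (Du x) powr (p-2) * (exp (\<alpha> * u x) * exp (\<alpha> * u x)) * \<psi> x * (Du x \<bullet> D\<psi> x))
         + w x * norm (Du x) powr (p-2) * (exp (\<alpha> * u x) * exp (\<alpha> * u x)) * (norm (D\<psi> x))^2"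
      unfolding D\<phi>2_def power2_norm_eq_inner
      by (simp add: inner_add_right inner_add_left n2[symmetric] n3[symmetric] inner_commute algebra_simps power2_eq_square)
    then show "w x * norm (Du x) powr (p - 2) * (norm (D\<phi>2 x))\<^sup>2 = \<alpha>^2 * fI x + 2*\<alpha> * fJ x + fK x"
      unfolding gg ee fI_def fJ_def fK_def by simp
  qed
  have P4: "\<And>x. exp (u x) * (\<phi>2 x)\<^sup>2 = fE x"
    unfolding \<phi>2_def fE_def by (simp add: mult_exp_exp algebra_simps power2_eq_square)
  have iS: "integrable lborel (\<lambda>x. w x * norm (Du x) powr (p - 2) * (norm (D\<phi>2 x))\<^sup>2)"
    unfolding P3 using iI iJ iK by simp
  have P5: "\<And>x. w x * norm (Du x) powr (p - 4) * (Du x \<bullet> D\<phi>2 x)\<^sup>2 \<le> w x * norm (Du x) powr (p - 2) * (norm (D\<phi>2 x))\<^sup>2"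
  proof -
    fix x
    have "norm (Du x) powr (p - 4) * (Du x \<bullet> D\<phi>2 x)\<^sup>2 \<le> norm (Du x) powr (p - 2) * (norm (D\<phi>2 x))\<^sup>2"
      by (rule gp4) (auto simp: Cauchy_Schwarz_ineq2)
    then show "w x * norm (Du x) powr (p - 4) * (Du x \<bullet> D\<phi>2 x)\<^sup>2 \<le> w x * norm (Du x) powr (p - 2) * (norm (D\<phi>2 x))\<^sup>2"
      using wpos[of x] by (simp add: mult.assoc mult_left_mono)
  qed
  have drop: "(\<integral>x. w x * norm (Du x) powr (p - 4) * (Du x \<bullet> D\<phi>2 x)\<^sup>2 \<partial>lborel)
      \<le> (\<integral>x. w x * norm (Du x) powr (p - 2) * (norm (D\<phi>2 x))\<^sup>2 \<partial>lborel)"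
  proof (cases "integrable lborel (\<lambda>x. w x * norm (Du x) powr (p - 4) * (Du x \<bullet> D\<phi>2 x)\<^sup>2)")
    case True
    then show ?thesis using iS P5 by (intro Bochner_Integration.integral_mono) auto
  next
    case False
    then have "(\<integral>x. w x * norm (Du x) powr (p - 4) * (Du x \<bullet> D\<phi>2 x)\<^sup>2 \<partial>lborel) = 0"
      by (rule not_integrable_integral_eq)
    moreover have "0 \<le> (\<integral>x. w x * norm (Du x) powr (p - 2) * (norm (D\<phi>2 x))\<^sup>2 \<partial>lborel)"
      by (intro integral_nonneg_AE AE_I2 mult_nonneg_nonneg) (auto simp: less_imp_le[OF wpos])
    ultimately show ?thesis by simp
  qed
  have hS: "(\<integral>x. fE x \<partial>lborel) \<le> (p-1) * (\<alpha>^2 * (\<integral>x. fI x \<partial>lborel) + 2*\<alpha>*(\<integral>x. fJ x \<partial>lborel) + (\<integral>x. fK x \<partial>lborel))"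
  proof -
    have e1: "(\<integral>x. w x * norm (Du x) powr (p - 2) * (norm (D\<phi>2 x))\<^sup>2 \<partial>lborel)
       = \<alpha>^2 * (\<integral>x. fI x \<partial>lborel) + 2*\<alpha>*(\<integral>x. fJ x \<partial>lborel) + (\<integral>x. fK x \<partial>lborel)"
      unfolding P3 using iI iJ iK by simp
    have e2: "(\<integral>x. exp (u x) * (\<phi>2 x)\<^sup>2 \<partial>lborel) = (\<integral>x. fE x \<partial>lborel)" unfolding P4 ..
    have "(p-2) * (\<integral>x. w x * norm (Du x) powr (p - 4) * (Du x \<bullet> D\<phi>2 x)\<^sup>2 \<partial>lborel)
      \<le> (p-2) * (\<integral>x. w x * norm (Du x) powr (p - 2) * (norm (D\<phi>2 x))\<^sup>2 \<partial>lborel)"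
      using drop p by (intro mult_left_mono) auto
    then show ?thesis using S2 unfolding e1 e2 by (simp add: algebra_simps)
  qed
  have Y1p: "\<And>x. fK x \<le> \<epsilon> * fI x + K1 * fT x"
  proof -
    fix x
    define c where "c = w x * exp (2*\<alpha>*u x)"
    have c0: "c \<ge> 0" unfolding c_def by (simp add: less_imp_le[OF wpos])
    have h: "norm (Du x) powr (p-2) * (norm (D\<psi> x))^2 \<le> \<epsilon> * (norm (Du x) powr p * (y x)^(2*m)) + K1 * (R powr (-p) * y x powr (2*real m - p))"
      using HY1 y0[of x] R D\<psi>b[of x] by auto
    have "c * (norm (Du x) powr (p-2) * (norm (D\<psi> x))^2) \<le> c * (\<epsilon> * (norm (Du x) powr p * (y x)^(2*m)) + K1 * (R powr (-p) * y x powr (2*real m - p)))"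
      using h c0 by (rule mult_left_mono)
    then show "fK x \<le> \<epsilon> * fI x + K1 * fT x"
      unfolding fK_def fI_def fT_def \<psi>_def c_def power_even_eq by (simp add: algebra_simps)
  qed
  have Y2p: "\<And>x. fJ x \<le> \<epsilon> * fI x + K2 * fT x"
  proof -
    fix x
    define c where "c = w x * exp (2*\<alpha>*u x)"
    have c0: "c \<ge> 0" unfolding c_def by (simp add: less_imp_le[OF wpos])
    have h: "norm (Du x) powr (p-1) * ((y x)^m * norm (D\<psi> x)) \<le> \<epsilon> * (norm (Du x) powr p * (y x)^(2*m)) + K2 * (R powr (-p) * y x powr (2*real m - p))"
      using HY2 y0[of x] R D\<psi>b[of x] by auto
    have psi0: "\<psi> x \<ge> 0" unfolding \<psi>_def using y0 by simp
    have cs: "Du x \<bullet> D\<psi> x \<le> norm (Du x) * norm (D\<psi> x)" by (rule norm_cauchy_schwarz)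
    have "fJ x = c * norm (Du x) powr (p-2) * \<psi> x * (Du x \<bullet> D\<psi> x)" unfolding fJ_def c_def by (simp add: algebra_simps)
    also have "\<dots> \<le> c * norm (Du x) powr (p-2) * \<psi> x * (norm (Du x) * norm (D\<psi> x))"
      using cs c0 psi0 by (intro mult_left_mono) auto
    also have "\<dots> = c * ((norm (Du x) powr (p-2) * norm (Du x)) * ((y x)^m * norm (D\<psi> x)))"
      unfolding \<psi>_def by (simp add: algebra_simps)
    also have "norm (Du x) powr (p-2) * norm (Du x) = norm (Du x) powr (p-1)" by (rule gp1) simp
    also have "c * (norm (Du x) powr (p-1) * ((y x)^m * norm (D\<psi> x))) \<le> c * (\<epsilon> * (norm (Du x) powr p * (y x)^(2*m)) + K2 * (R powr (-p) * y x powr (2*real m - p)))"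
      using h c0 by (rule mult_left_mono)
    finally show "fJ x \<le> \<epsilon> * fI x + K2 * fT x"
      unfolding fI_def fT_def \<psi>_def c_def power_even_eq by (simp add: algebra_simps)
  qed
  have Y3p: "\<And>x. fT x \<le> \<theta> * fE x + K3 * fW x"
  proof -
    fix x
    have h: "w x * exp (2 * \<alpha> * u x) * (R powr (-p) * y x powr (2*real m - p)) \<le>
       \<theta> * (exp ((2*\<alpha>+1) * u x) * (y x)^(2*m)) + K3 * (R powr (-p*(2*\<alpha>+1)) * w x powr (2*\<alpha>+1)) * (if y x > 0 then 1 else 0)"
      using HY3 wpos[of x] y0[of x] y1[of x] R by blast
    have ind: "(if y x > 0 then 1 else 0) = indicator (ball 0 (2*R)) x"
    proof (cases "norm x < 2*R")
      case True
      then have "y x > 0" unfolding y_def using eta_pos[OF R] by blast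
      then show ?thesis using True by simp
    next
      case False
      then have "y x = 0" using yz by simp
      then show ?thesis using False by simp
    qed
    show "fT x \<le> \<theta> * fE x + K3 * fW x"
      using h unfolding ind fT_def fE_def fW_def \<psi>_def power_even_eq by (simp add: algebra_simps)
  qed
  define I where "I = (\<integral>x. fI x \<partial>lborel)"
  define J where "J = (\<integral>x. fJ x \<partial>lborel)"
  define K where "K = (\<integral>x. fK x \<partial>lborel)"
  define E where "E = (\<integral>x. fE x \<partial>lborel)"
  define T where "T = (\<integral>x. fT x \<partial>lborel)"
  define W where "W = (\<integral>x. fW x \<partial>lborel)"
  have I0: "I \<ge> 0" unfolding I_def using ipos by (intro integral_nonneg_AE AE_I2) auto
  have T0: "T \<ge> 0" unfolding T_def using Tpos by (intro integral_nonneg_AE AE_I2) auto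
  have hK: "K \<le> \<epsilon>*I + K1*T"
  proof -
    have "K \<le> (\<integral>x. \<epsilon> * fI x + K1 * fT x \<partial>lborel)" unfolding K_def
      using iK iI iT Y1p by (intro Bochner_Integration.integral_mono) auto
    then show ?thesis using iI iT by (simp add: I_def T_def)
  qed
  have hJ: "J \<le> \<epsilon>*I + K2*T"
  proof -
    have "J \<le> (\<integral>x. \<epsilon> * fI x + K2 * fT x \<partial>lborel)" unfolding J_def
      using iJ iI iT Y2p by (intro Bochner_Integration.integral_mono) auto
    then show ?thesis using iI iT by (simp add: I_def T_def)
  qed
  have hT: "T \<le> \<theta>*E + K3*W"
  proof -
    have "T \<le> (\<integral>x. \<theta> * fE x + K3 * fW x \<partial>lborel)" unfolding T_def
      using iT iE iW Y3p by (intro Bochner_Integration.integral_mono) auto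
    then show ?thesis using iE iW by (simp add: E_def W_def)
  qed
  have EC: "E \<le> C3 * T"
    unfolding C3def
    by (rule alg[OF p a0 bdef b0 gdef g0 e0 eps _ _ I0 T0])
       (use K1 K2 hE hS hK hJ in \<open>auto simp: I_def J_def K_def E_def\<close>)
  have C3pos: "C3 > 0" unfolding C3def using a0 e0 b0 g0 K1 K2 p
    by (intro add_pos_pos mult_pos_pos divide_pos_pos add_nonneg_pos) auto
  have "E \<le> C3 * (\<theta>*E + K3*W)" using EC hT C3pos by (smt (verit) mult_left_mono)
  also have "\<dots> = E/2 + C3*K3*W" unfolding th using C3pos by (simp add: field_simps)
  finally have "E \<le> 2*C3*K3*W" by simp
  moreover have "W = R powr (-p*(2*\<alpha>+1)) * (LINT x : ball 0 (2*R) | lborel. w x powr (2*\<alpha>+1))"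
    unfolding W_def fW_def set_lebesgue_integral_def by simp
  ultimately show ?thesis unfolding E_def fE_def \<psi>_def y_def by (simp add: mult.assoc)
qed


lemma set_int_ball:
  fixes f :: "'a::euclidean_space \<Rightarrow> real"
  assumes "continuous_on UNIV f"
  shows "set_integrable lborel (ball 0 r) f"
proof -
  have "set_integrable lborel (cball 0 r) f"
    unfolding set_integrable_def by (rule borel_integrable_compact) (auto intro: continuous_on_subset[OF assms])
  then show ?thesis by (rule set_integrable_subset) auto
qed

lemma eta_mono: assumes "1 \<le> R" shows "eta 1 x \<le> eta R x"
proof -
  have "(x \<bullet> x) / (4 * R^2) \<le> (x \<bullet> x) / (4 * 1^2)"
    using assms by (intro divide_left_mono mult_left_mono) (auto simp: one_le_power)
  then show ?thesis unfolding eta_def by simp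
qed

theorem theorem1:
  fixes w :: "'a::euclidean_space \<Rightarrow> real" and Dw :: "'a \<Rightarrow> 'a"
    and p C \<mu> \<zeta> :: real
  assumes "p > 2"
    and "C1_grad w Dw"
    and "C > 0" and "\<forall>x. w x > C"
    and "(\<lambda>R. LINT x : ball 0 (2 * R) | lborel. w x powr ((p + 3) / (p - 1)))
           \<in> O[at_top](\<lambda>R. R powr \<mu>)"
    and "\<mu> < p * (p + 3) / (p - 1)"
    and "0 < \<zeta>" and "\<zeta> < 1"
  shows "\<not> (\<exists>u Du. C1_holder_loc_grad \<zeta> u Du \<and> weak_solution p w exp u Du \<and> stable p w exp u Du)"
proof
  assume "\<exists>u Du. C1_holder_loc_grad \<zeta> u Du \<and> weak_solution p w exp u Du \<and> stable p w exp u Du"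
  then obtain u Du where hu: "C1_holder_loc_grad \<zeta> u Du" and weak: "weak_solution p w exp u Du"
    and st: "stable p w exp u Du" by blast
  have p: "p > 2" using assms(1) .
  have C0: "C > 0" using assms(3) .
  have wC: "\<And>x. w x > C" using assms(4) by blast
  have wpos: "\<And>x. w x > 0" using wC C0 by (metis less_trans)
  have cw: "continuous_on UNIV w" using assms(2) unfolding C1_grad_def by (blast intro: grad_cont)
  have gu: "is_gradient u Du" and cDu: "continuous_on UNIV Du"
    using hu unfolding C1_holder_loc_grad_def C1_grad_def by auto
  have cu: "continuous_on UNIV u" using gu by (rule grad_cont)
  define q where "q = (p+3)/(p-1)"
  define gap where "gap = p*(p+3)/(p-1) - \<mu>"
  have gap0: "gap > 0" using assms(6) unfolding gap_def by simp
  define \<tau> where "\<tau> = min (1/(2*(p-1))) (gap/(4*p))"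
  have tau0: "\<tau> > 0" unfolding \<tau>_def using gap0 p by simp
  have tau1: "\<tau> \<le> 1/(2*(p-1))" and tau2: "\<tau> \<le> gap/(4*p)" unfolding \<tau>_def by auto
  define \<alpha> where "\<alpha> = 2/(p-1) - \<tau>"
  have pt: "(p-1)*\<tau> \<le> 1/2" using tau1 p by (simp add: field_simps)
  have a0: "\<alpha> > 0"
  proof -
    have "1/(2*(p-1)) < 2/(p-1)" using p by (simp add: field_simps)
    then have "\<tau> < 2/(p-1)" using tau1 by linarith
    then show ?thesis unfolding \<alpha>_def by simp
  qed
  have pa: "(p-1)*\<alpha> = 2 - (p-1)*\<tau>" unfolding \<alpha>_def using p by (simp add: field_simps)
  define \<beta> where "\<beta> = (p-1)*\<alpha> - 1"
  have b0: "\<beta> > 0" unfolding \<beta>_def pa using pt by simp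
  define \<gamma> where "\<gamma> = \<alpha> * (2 - (p-1)*\<alpha>)"
  have g0: "\<gamma> > 0" unfolding \<gamma>_def pa using a0 tau0 p by simp
  have q2: "2*\<alpha>+1 = q - 2*\<tau>" unfolding \<alpha>_def q_def using p by (simp add: field_simps)
  have pmu: "p*(2*\<alpha>+1) > \<mu>"
  proof -
    define X where "X = p*(p+3)/(p-1)"
    define Z where "Z = p*\<tau>"
    have h1: "p*(2*\<alpha>+1) = X - 2*Z" unfolding q2 q_def X_def Z_def by (simp add: algebra_simps)
    have h2: "2*Z \<le> (X - \<mu>)/2" using tau2 p unfolding X_def Z_def gap_def by (simp add: field_simps)
    have h3: "Z > 0" unfolding Z_def using p tau0 by simp
    show ?thesis unfolding h1 using h2 h3 by (simp add: field_simps)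
  qed
  define m where "m = nat \<lceil>p*(2*\<alpha>+1)\<rceil> + 2"
  have mge: "real m \<ge> p*(2*\<alpha>+1) + 2" unfolding m_def by linarith
  have m2: "m \<ge> 2" unfolding m_def by simp
  have pp: "p*(2*\<alpha>+1) \<ge> p" using p a0 by (simp add: algebra_simps)
  have mp: "2 * real m \<ge> p*(2*\<alpha>+1)" using mge pp p by linarith
  have mp2: "2 * real m > p" using mge pp p by linarith
  define \<epsilon> where "\<epsilon> = \<gamma>/(2*(2*\<beta>+p-1))"
  have e0: "\<epsilon> > 0" unfolding \<epsilon>_def using g0 b0 p by simp
  define dd where "dd = 2*\<beta> + p - 1"
  have dnz: "dd \<noteq> 0" unfolding dd_def using b0 p by simp
  have "dd * (\<gamma>/(2*dd)) = \<gamma>/2" using dnz by (simp add: field_simps)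
  then have eps: "(2*\<beta> + p - 1) * \<epsilon> \<le> \<gamma>/2" unfolding \<epsilon>_def dd_def by simp
  obtain K1 where K1: "K1 > 0" and HY1: "\<forall>g y d R. 0 \<le> g \<longrightarrow> 0 \<le> y \<longrightarrow> 0 < R \<longrightarrow> 0 \<le> d \<longrightarrow>
     d \<le> real m * y^(m-1) / R \<longrightarrow>
     g powr (p-2) * d^2 \<le> \<epsilon> * (g powr p * y^(2*m)) + K1 * (R powr (-p) * y powr (2*real m - p))"
    using Y1[OF p mp2 e0] by blast
  obtain K2 where K2: "K2 > 0" and HY2: "\<forall>g y d R. 0 \<le> g \<longrightarrow> 0 \<le> y \<longrightarrow> 0 < R \<longrightarrow> 0 \<le> d \<longrightarrow>
     d \<le> real m * y^(m-1) / R \<longrightarrow>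
     g powr (p-1) * (y^m * d) \<le> \<epsilon> * (g powr p * y^(2*m)) + K2 * (R powr (-p) * y powr (2*real m - p))"
    using Y2[OF p mp2 e0] by blast
  define C3 where "C3 = (2*\<alpha>+2*\<epsilon>) * (2*(2*\<beta>*K2 + (p-1)*K1)/\<gamma>) + 2*K2"
  have C3pos: "C3 > 0" unfolding C3_def using a0 e0 b0 g0 K1 K2 p
    by (intro add_pos_pos mult_pos_pos divide_pos_pos add_nonneg_pos) auto
  define \<theta> where "\<theta> = 1/(2*C3)"
  have th0: "\<theta> > 0" unfolding \<theta>_def using C3pos by simp
  obtain K3 where K3: "K3 > 0" and HY3: "\<forall>\<omega> v y R. 0 < \<omega> \<longrightarrow> 0 \<le> y \<longrightarrow> y \<le> 1 \<longrightarrow> 0 < R \<longrightarrow>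
     \<omega> * exp (2 * \<alpha> * v) * (R powr (-p) * y powr (2*real m - p)) \<le>
       \<theta> * (exp ((2*\<alpha>+1) * v) * y^(2*m)) + K3 * (R powr (-p*(2*\<alpha>+1)) * \<omega> powr (2*\<alpha>+1)) * (if y > 0 then 1 else 0)"
    using Y3[OF p a0 mp th0] by blast
  define E where "E = (\<lambda>R. (\<integral>x. exp ((2*\<alpha>+1) * u x) * ((eta R x)^m)^2 \<partial>lborel))"
  have keyR: "\<And>R. R > 0 \<Longrightarrow> E R \<le> 2*C3*K3 * (R powr (-p*(2*\<alpha>+1)) * (LINT x : ball 0 (2*R) | lborel. w x powr (2*\<alpha>+1)))"
    unfolding E_def
    by (rule key[OF p cw wpos gu cDu weak st a0 m2 mp mp2 \<beta>_def b0 \<gamma>_def g0 e0 eps K1 K2 K3 HY1 HY2 HY3 C3_def \<theta>_def])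
  have cwa: "continuous_on UNIV (\<lambda>x. w x powr (2*\<alpha>+1))" using a0 wpos by (intro cont_npowr cw) (auto intro: less_imp_le)
  have q0: "q > 0" unfolding q_def using p by simp
  have cwq: "continuous_on UNIV (\<lambda>x. w x powr q)" using q0 wpos by (intro cont_npowr cw) (auto intro: less_imp_le)
  define A where "A = (\<lambda>R. LINT x : ball 0 (2 * R) | lborel. w x powr ((p + 3) / (p - 1)))"
  obtain c where c0: "c > 0" and ev: "eventually (\<lambda>R. norm (A R) \<le> c * norm (R powr \<mu>)) at_top"
    using landau_o.bigE[OF assms(5)] unfolding A_def by blast
  have Wb: "\<And>R. (LINT x : ball 0 (2*R) | lborel. w x powr (2*\<alpha>+1)) \<le> C powr (2*\<alpha>+1-q) * A R"
  proof -
    fix R :: real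
    have pw: "\<And>x. w x powr (2*\<alpha>+1) \<le> C powr (2*\<alpha>+1-q) * w x powr q"
    proof -
      fix x
      have "w x powr (2*\<alpha>+1) = w x powr (2*\<alpha>+1-q) * w x powr q" by (simp add: powr_add[symmetric])
      also have "w x powr (2*\<alpha>+1-q) \<le> C powr (2*\<alpha>+1-q)"
        by (rule powr_mono2') (use q2 tau0 C0 wC[of x] in auto)
      then have "w x powr (2*\<alpha>+1-q) * w x powr q \<le> C powr (2*\<alpha>+1-q) * w x powr q"
        by (rule mult_right_mono) simp
      finally show "w x powr (2*\<alpha>+1) \<le> C powr (2*\<alpha>+1-q) * w x powr q" .
    qed
    have "(LINT x : ball 0 (2*R) | lborel. w x powr (2*\<alpha>+1)) \<le> (LINT x : ball 0 (2*R) | lborel. C powr (2*\<alpha>+1-q) * w x powr q)"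
      by (rule set_integral_mono) (use set_int_ball[OF cwa] set_int_ball[OF cwq] pw in auto)
    also have "\<dots> = C powr (2*\<alpha>+1-q) * A R" unfolding A_def q_def by simp
    finally show "(LINT x : ball 0 (2*R) | lborel. w x powr (2*\<alpha>+1)) \<le> C powr (2*\<alpha>+1-q) * A R" .
  qed
  define f1 where "f1 = (\<lambda>x::'a. exp ((2*\<alpha>+1) * u x) * ((eta 1 x)^m)^2)"
  have cf1: "continuous_on UNIV f1" unfolding f1_def
    by (intro continuous_intros cu eta_cont) simp
  have f1nn: "\<And>x. f1 x \<ge> 0" unfolding f1_def by simp
  have iE: "\<And>R. R > 0 \<Longrightarrow> integrable lborel (\<lambda>x::'a. exp ((2*\<alpha>+1) * u x) * ((eta R x)^m)^2)"
  proof -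
    fix R :: real assume R0: "R > 0"
    show "integrable lborel (\<lambda>x::'a. exp ((2*\<alpha>+1) * u x) * ((eta R x)^m)^2)"
      by (rule integrable_supp[where r="2*R"]) (use m2 R0 in \<open>auto intro!: continuous_intros cu eta_cont simp: eta_zero\<close>)
  qed
  have E1pos: "E 1 > 0"
  proof -
    have f10: "f1 0 > 0" unfolding f1_def eta_def by simp
    have "isCont f1 0" using cf1 by (simp add: continuous_on_eq_continuous_at)
    then have "(f1 \<longlongrightarrow> f1 0) (at 0)" by (simp add: isCont_def)
    then have "eventually (\<lambda>x. f1 x > f1 0 / 2) (at 0)" using f10 by (intro order_tendstoD(1)) auto
    then obtain d where d0: "d > 0" and hd: "\<And>x. x \<noteq> 0 \<Longrightarrow> dist x 0 < d \<Longrightarrow> f1 x > f1 0 / 2"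
      unfolding eventually_at by auto
    have lb: "\<And>x. indicator (cball (0::'a) (d/2)) x *\<^sub>R (f1 0 / 2) \<le> f1 x"
    proof -
      fix x :: 'a
      show "indicator (cball (0::'a) (d/2)) x *\<^sub>R (f1 0 / 2) \<le> f1 x"
      proof (cases "x \<in> cball 0 (d/2)")
        case True
        show ?thesis
        proof (cases "x = 0")
          case True then show ?thesis using f10 by (simp add: indicator_def)
        next
          case False
          then have "f1 x > f1 0 / 2" using hd True d0 by (auto simp: dist_norm)
          then show ?thesis using True by simp
        qed
      next
        case False then show ?thesis using f1nn by simp
      qed
    qed
    have il: "integrable lborel (\<lambda>x. indicator (cball (0::'a) (d/2)) x *\<^sub>R (f1 0 / 2))"
      by (rule borel_integrable_compact) auto
    have "(\<integral>x. indicator (cball (0::'a) (d/2)) x *\<^sub>R (f1 0 / 2) \<partial>lborel) \<le> E 1"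
      unfolding E_def using il iE[of 1] lb unfolding f1_def by (intro Bochner_Integration.integral_mono) auto
    moreover have "(\<integral>x. indicator (cball (0::'a) (d/2)) x *\<^sub>R (f1 0 / 2) \<partial>lborel) = measure lborel (cball (0::'a) (d/2)) * (f1 0 / 2)"
      by simp
    moreover have "measure lborel (cball (0::'a) (d/2)) * (f1 0 / 2) > 0"
      using d0 f10 by (intro mult_pos_pos) (auto simp: content_cball_pos)
    ultimately show ?thesis by linarith
  qed
  have Emono: "\<And>R. R \<ge> 1 \<Longrightarrow> E 1 \<le> E R"
  proof -
    fix R :: real assume R1: "R \<ge> 1"
    show "E 1 \<le> E R" unfolding E_def
    proof (rule Bochner_Integration.integral_mono)
      show "integrable lborel (\<lambda>x::'a. exp ((2*\<alpha>+1) * u x) * ((eta 1 x)^m)^2)" by (rule iE) simp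
      show "integrable lborel (\<lambda>x::'a. exp ((2*\<alpha>+1) * u x) * ((eta R x)^m)^2)" by (rule iE) (use R1 in simp)
      fix x :: 'a
      have "(eta 1 x)^m \<le> (eta R x)^m" using eta_mono[OF R1] by (intro power_mono) (auto simp: eta_ge0)
      then have "((eta 1 x)^m)^2 \<le> ((eta R x)^m)^2" by (rule power_mono) (simp add: eta_ge0)
      then show "exp ((2*\<alpha>+1) * u x) * ((eta 1 x)^m)^2 \<le> exp ((2*\<alpha>+1) * u x) * ((eta R x)^m)^2"
        by (intro mult_left_mono) auto
    qed
  qed
  define M where "M = 2*C3*K3 * (C powr (2*\<alpha>+1-q) * c)"
  have M0: "M \<ge> 0" unfolding M_def using C3pos K3 c0 by simp
  have bound: "eventually (\<lambda>R. E 1 \<le> M * R powr (\<mu> - p*(2*\<alpha>+1))) at_top"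
    using ev eventually_ge_at_top[of "1::real"]
  proof eventually_elim
    case (elim R)
    then have R0: "R > 0" by simp
    have AR: "A R \<le> c * R powr \<mu>" using elim(1) R0 by simp
    have "E 1 \<le> E R" using Emono elim(2) by simp
    also have "\<dots> \<le> 2*C3*K3 * (R powr (-p*(2*\<alpha>+1)) * (LINT x : ball 0 (2*R) | lborel. w x powr (2*\<alpha>+1)))"
      using keyR[OF R0] .
    also have "\<dots> \<le> 2*C3*K3 * (R powr (-p*(2*\<alpha>+1)) * (C powr (2*\<alpha>+1-q) * (c * R powr \<mu>)))"
      using Wb[of R] AR C3pos K3 C0
      by (intro mult_left_mono) (auto intro: order_trans mult_left_mono)
    also have "\<dots> = M * (R powr (-p*(2*\<alpha>+1)) * R powr \<mu>)" unfolding M_def by (simp add: algebra_simps)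
    also have "R powr (-p*(2*\<alpha>+1)) * R powr \<mu> = R powr (\<mu> - p*(2*\<alpha>+1))"
      by (simp add: powr_add[symmetric])
    finally show ?case .
  qed
  have lim: "((\<lambda>R. M * R powr (\<mu> - p*(2*\<alpha>+1))) \<longlongrightarrow> M * 0) at_top"
    by (intro tendsto_intros tendsto_neg_powr filterlim_ident) (use pmu in simp)
  have "eventually (\<lambda>R. M * R powr (\<mu> - p*(2*\<alpha>+1)) < E 1) at_top"
    using lim E1pos by (intro order_tendstoD(2)) auto
  with bound have "eventually (\<lambda>R::real. False) at_top"
    by eventually_elim simp
  then show False by simp
qed

end
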